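(* Let $\mu, t \in \mathbb{R}$, $\sigma>0$, $\lambda>0$ with $\lambda \ge (\mu-t)_-$. Let $\mathcal{L}_{\lambda}(\mu,\sigma)$ be the set of all probability distributions $F$ on $\mathbb{R}$ such that, for $X\sim F$, $\mathbb{E}^F[X]=\mu$, $\mathbb{E}^F[X^2]=\mu^2+\sigma^2$, and $\mathbb{E}^F[(X-t)_-]\le \lambda$. Then \[ \sup_{F \in \mathcal{L}_{\lambda}(\mu, \sigma)} \mathbb{E}^{F}[(X-t)^2_+] = \begin{cases} \sigma^2 + (\mu-t)_+^2, & \lambda > (\mu-t)_-, \\ 0, & \lambda=(\mu-t)_-. \end{cases} \]
   Context: For $x\in\mathbb{R}$, $(x)_+=\max\{x,0\}$ and $(x)_-=\max\{-x,0\}$. $\mathbb{E}^F$ denotes expectation when $X$ has distribution $F$. *)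

theory Defs
  imports "HOL-Probability.Probability"
begin

definition pos_part :: "real \<Rightarrow> real" where
  "pos_part x = max x 0"

definition neg_part :: "real \<Rightarrow> real" where
  "neg_part x = max (- x) 0"

definition Lclass :: "real \<Rightarrow> real \<Rightarrow> real \<Rightarrow> real \<Rightarrow> real measure set" where
  "Lclass lam mu sig t =
     {F. prob_space F \<and> sets F = sets borel \<and>
         integrable F (\<lambda>x. x) \<and> integrable F (\<lambda>x. x ^ 2) \<and>
         (\<integral>x. x \<partial>F) = mu \<and>
         (\<integral>x. x ^ 2 \<partial>F) = mu ^ 2 + sig ^ 2 \<and>
         (\<integral>x. neg_part (x - t) \<partial>F) \<le> lam}"

end

theory Submission
  imports Defs
begin

lemma pn_facts:
  "pos_part x \<ge> 0" "neg_part x \<ge> 0" "pos_part x - neg_part x = x"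
  "(pos_part x)^2 + (neg_part x)^2 = x^2"
  by (auto simp: pos_part_def neg_part_def max_def power2_eq_square)

lemma two_point:
  fixes l h q :: real
  assumes q: "0 < q" "q < 1"
  defines "D \<equiv> distr (measure_pmf (bernoulli_pmf q)) borel (\<lambda>b. if b then h else l)"
  shows "prob_space D" "sets D = sets borel"
    "\<And>f::real\<Rightarrow>real. f \<in> borel_measurable borel \<Longrightarrow> integrable D f"
    "\<And>f::real\<Rightarrow>real. f \<in> borel_measurable borel \<Longrightarrow> (\<integral>x. f x \<partial>D) = f h * q + f l * (1 - q)"
proof -
  have m: "(\<lambda>b. if b then h else l) \<in> measurable (measure_pmf (bernoulli_pmf q)) borel" by simp
  show "prob_space D" unfolding D_def
    by (rule prob_space.prob_space_distr[OF _ m]) (rule prob_space_measure_pmf)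
  show "sets D = sets borel" unfolding D_def by simp
  fix f :: "real \<Rightarrow> real" assume f: "f \<in> borel_measurable borel"
  show "integrable D f" unfolding D_def
    using integrable_distr_eq[OF m f]
    by (simp add: integrable_measure_pmf_finite)
  show "(\<integral>x. f x \<partial>D) = f h * q + f l * (1 - q)" unfolding D_def
    using integral_distr[OF m f] q by simp
qed

lemma pos_meas[measurable]: "pos_part \<in> borel_measurable borel"
  unfolding pos_part_def[abs_def] by measurable
lemma neg_meas[measurable]: "neg_part \<in> borel_measurable borel"
  unfolding neg_part_def[abs_def] by measurable

lemma upper:
  assumes "F \<in> Lclass lam mu sig t"
  shows "integrable F (\<lambda>x. (pos_part (x - t))^2)"
    "0 \<le> (\<integral>x. (pos_part (x - t))^2 \<partial>F)"
    "(\<integral>x. (pos_part (x - t))^2 \<partial>F) \<le> sig^2 + (pos_part (mu - t))^2"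
    "lam \<le> neg_part (mu - t) \<Longrightarrow> 0 < lam \<Longrightarrow> (\<integral>x. (pos_part (x - t))^2 \<partial>F) = 0"
proof -
  note A = assms[unfolded Lclass_def, simplified]
  interpret prob_space F using A by simp
  have i1: "integrable F (\<lambda>x. x)" and i2: "integrable F (\<lambda>x. x^2)" using A by auto
  have E1: "(\<integral>x. x \<partial>F) = mu" and E2: "(\<integral>x. x^2 \<partial>F) = mu^2 + sig^2"
    and EN: "(\<integral>x. neg_part (x - t) \<partial>F) \<le> lam" using A by auto
  have mx[measurable]: "(\<lambda>x. x) \<in> borel_measurable F" using i1 by auto
  have isq: "integrable F (\<lambda>x. (x - t)^2)"
  proof -
    have "integrable F (\<lambda>x. x^2 - 2 * t * x + t^2)" using i1 i2 by auto
    moreover have "(\<lambda>x. x^2 - 2 * t * x + t^2) = (\<lambda>x. (x - t)^2)"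
      by (auto simp: power2_eq_square algebra_simps)
    ultimately show ?thesis by simp
  qed
  have Esq: "(\<integral>x. (x - t)^2 \<partial>F) = (mu - t)^2 + sig^2"
  proof -
    have "(\<lambda>x. (x - t)^2) = (\<lambda>x. x^2 - 2 * t * x + t^2)"
      by (auto simp: power2_eq_square algebra_simps)
    then have "(\<integral>x. (x - t)^2 \<partial>F) = (\<integral>x. x^2 - 2 * t * x + t^2 \<partial>F)" by simp
    also have "\<dots> = (\<integral>x. x^2 \<partial>F) - 2 * t * (\<integral>x. x \<partial>F) + t^2"
      using i1 i2 prob_space by simp
    finally show ?thesis using E1 E2 by (simp add: power2_eq_square algebra_simps)
  qed
  have mp[measurable]: "(\<lambda>x. pos_part (x - t)) \<in> borel_measurable F" by measurable
  have mn[measurable]: "(\<lambda>x. neg_part (x - t)) \<in> borel_measurable F" by measurable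
  have ip2: "integrable F (\<lambda>x. (pos_part (x - t))^2)"
    by (rule Bochner_Integration.integrable_bound[OF isq]) (auto intro!: AE_I2 simp: pn_facts(1) 
         pn_facts(4)[symmetric, of "_ - t"])
  have in2: "integrable F (\<lambda>x. (neg_part (x - t))^2)"
    by (rule Bochner_Integration.integrable_bound[OF isq]) (auto intro!: AE_I2 simp: pn_facts(2) 
         pn_facts(4)[symmetric, of "_ - t"])
  have iab: "integrable F (\<lambda>x. x - t)" using i1 by auto
  have ip: "integrable F (\<lambda>x. pos_part (x - t))"
    by (rule Bochner_Integration.integrable_bound[OF iab]) (auto intro!: AE_I2 simp: pos_part_def)
  have ineg: "integrable F (\<lambda>x. neg_part (x - t))"
    by (rule Bochner_Integration.integrable_bound[OF iab]) (auto intro!: AE_I2 simp: neg_part_def)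
  show "integrable F (\<lambda>x. (pos_part (x - t))^2)" by (fact ip2)
  show "0 \<le> (\<integral>x. (pos_part (x - t))^2 \<partial>F)" by (simp add: pn_facts)
  define c where "c = (\<integral>x. neg_part (x - t) \<partial>F)"
  have Ediff: "(\<integral>x. pos_part (x - t) \<partial>F) - c = mu - t"
  proof -
    have "(\<integral>x. pos_part (x - t) \<partial>F) - c = (\<integral>x. pos_part (x - t) - neg_part (x - t) \<partial>F)"
      unfolding c_def using ip ineg by simp
    also have "\<dots> = (\<integral>x. x - t \<partial>F)" by (simp add: pn_facts)
    also have "\<dots> = mu - t" using i1 E1 prob_space by simp
    finally show ?thesis .
  qed
  have c0: "0 \<le> c" unfolding c_def by (simp add: pn_facts)
  have p0: "0 \<le> (\<integral>x. pos_part (x - t) \<partial>F)" by (simp add: pn_facts)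
  have cge: "neg_part (mu - t) \<le> c" using Ediff c0 p0 by (simp add: neg_part_def)
  have var: "c^2 \<le> (\<integral>x. (neg_part (x - t))^2 \<partial>F)"
  proof -
    have "0 \<le> (\<integral>x. (neg_part (x - t) - c)^2 \<partial>F)" by simp
    also have "(\<lambda>x. (neg_part (x - t) - c)^2) = (\<lambda>x. (neg_part (x - t))^2 - 2 * c * neg_part (x - t) + c^2)"
      by (auto simp: power2_eq_square algebra_simps)
    also have "(\<integral>x. (neg_part (x - t))^2 - 2 * c * neg_part (x - t) + c^2 \<partial>F)
       = (\<integral>x. (neg_part (x - t))^2 \<partial>F) - 2 * c * c + c^2"
      using in2 ineg prob_space by (simp add: c_def)
    finally show ?thesis by (simp add: power2_eq_square)
  qed
  have split: "(\<integral>x. (pos_part (x - t))^2 \<partial>F) = (mu - t)^2 + sig^2 - (\<integral>x. (neg_part (x - t))^2 \<partial>F)"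
  proof -
    have "(\<integral>x. (pos_part (x - t))^2 \<partial>F) + (\<integral>x. (neg_part (x - t))^2 \<partial>F)
        = (\<integral>x. (pos_part (x - t))^2 + (neg_part (x - t))^2 \<partial>F)" using ip2 in2 by simp
    also have "\<dots> = (\<integral>x. (x - t)^2 \<partial>F)" by (simp add: pn_facts)
    finally show ?thesis using Esq by simp
  qed
  have "(neg_part (mu - t))^2 \<le> c^2" using cge by (simp add: pn_facts power_mono)
  moreover have "(mu - t)^2 = (pos_part (mu - t))^2 + (neg_part (mu - t))^2" by (simp add: pn_facts)
  ultimately show "(\<integral>x. (pos_part (x - t))^2 \<partial>F) \<le> sig^2 + (pos_part (mu - t))^2"
    using split var by linarith
  assume l1: "lam \<le> neg_part (mu - t)" and l2: "0 < lam"
  have "c = neg_part (mu - t)" using cge EN l1 c_def by simp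
  with l2 l1 have "mu - t < 0" "c = t - mu" by (auto simp: neg_part_def max_def split: if_splits)
  then have "(\<integral>x. pos_part (x - t) \<partial>F) = 0" using Ediff by simp
  then have "AE x in F. pos_part (x - t) = 0"
    using integral_nonneg_eq_0_iff_AE[OF ip] by (simp add: pn_facts)
  then have "AE x in F. (pos_part (x - t))^2 = 0" by auto
  then have "(\<integral>x. (pos_part (x - t))^2 \<partial>F) = (\<integral>x. 0 \<partial>F)"
    by (intro integral_cong_AE) auto
  then show "(\<integral>x. (pos_part (x - t))^2 \<partial>F) = 0" by simp
qed


lemma ring1: fixes x y A B :: real shows "x * A + (x + y) * B = x * (A + B) + y * B"
  and "x^2 * A + (x + y)^2 * B = x^2 * (A + B) + 2 * x * (y * B) + y^2 * B"
  by (simp_all add: power2_eq_square algebra_simps)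
lemma alg1: fixes s u c :: real assumes "0 < s"
  shows "(u + c/s) * (s^2/(1+s^2)) + (u - c * s) * (1/(1+s^2)) = u"
proof -
  have sp: "0 < 1 + s^2" by (simp add: add_pos_nonneg)
  have k: "(u + c/s) * s^2 = u * s^2 + c * s" using assms by (simp add: power2_eq_square field_simps)
  have "(u + c/s) * (s^2/(1+s^2)) + (u - c * s) * (1/(1+s^2)) = ((u + c/s) * s^2 + (u - c * s)) / (1 + s^2)"
    by (simp only: times_divide_eq_right mult_1_right add_divide_distrib)
  also have "\<dots> = u * (1 + s^2) / (1 + s^2)" unfolding k by (simp add: algebra_simps)
  finally show ?thesis using sp by simp
qed
lemma alg2: fixes s u c :: real assumes "0 < s"
  shows "(u + c/s)^2 * (s^2/(1+s^2)) + (u - c * s)^2 * (1/(1+s^2)) = u^2 + c^2"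
proof -
  have sp: "0 < 1 + s^2" by (simp add: add_pos_nonneg)
  have k: "(u + c/s)^2 * s^2 = (u * s + c)^2" using assms by (simp add: power2_eq_square field_simps)
  have "(u + c/s)^2 * (s^2/(1+s^2)) + (u - c * s)^2 * (1/(1+s^2)) = ((u + c/s)^2 * s^2 + (u - c * s)^2) / (1 + s^2)"
    by (simp only: times_divide_eq_right mult_1_right add_divide_distrib)
  also have "(u + c/s)^2 * s^2 + (u - c * s)^2 = (u^2 + c^2) * (1 + s^2)" unfolding k by (simp add: power2_eq_square algebra_simps)
  finally show ?thesis using sp by simp
qed
lemma alg3: fixes m sig t :: real assumes "m < 0" "0 < m^2 + sig^2"
  shows "t * (sig^2 / (m^2 + sig^2)) + (t + (m^2 + sig^2)/m) * (m^2/(m^2 + sig^2)) = t + m"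
    and "t^2 * (sig^2 / (m^2 + sig^2)) + (t + (m^2 + sig^2)/m)^2 * (m^2/(m^2 + sig^2)) = (t + m)^2 + sig^2"
    and "(m^2 + sig^2)/m * (m^2/(m^2 + sig^2)) = m"
proof -
  define K where "K = m^2 + sig^2"
  have K: "K > 0" "K \<noteq> 0" "m \<noteq> 0" using assms K_def by auto
  have q: "sig^2 / K + m^2 / K = 1" using K by (simp add: K_def add_divide_distrib[symmetric])
  have a1: "K/m * (m^2/K) = m" using K by (simp add: power2_eq_square)
  have a2: "(K/m)^2 * (m^2/K) = K" using K by (simp add: power2_eq_square)
  show "K/m * (m^2/K) = m" by (fact a1)
  show "t * (sig^2/K) + (t + K/m) * (m^2/K) = t + m" unfolding ring1(1) using q a1 by simp
  show "t^2 * (sig^2/K) + (t + K/m)^2 * (m^2/K) = (t + m)^2 + sig^2" unfolding ring1(2) using q a1 a2 K_def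
    by (simp add: power2_eq_square algebra_simps)
qed

lemma family:
  fixes mu t sig lam s :: real
  assumes sig: "sig > 0" and s: "0 < s" and sl: "sig * s \<le> lam - neg_part (mu - t)"
  shows "\<exists>F\<in>Lclass lam mu sig t.
     (mu - t)^2 + sig^2 - (neg_part (mu - t))^2 * s^2 - (neg_part (mu - t) + sig * s)^2
       \<le> (\<integral>x. (pos_part (x - t))^2 \<partial>F)"
proof -
  define m where "m = mu - t"
  define q where "q = s^2 / (1 + s^2)"
  define h where "h = mu + sig / s"
  define l where "l = mu - sig * s"
  have ht: "h - t = m + sig / s" and lt: "l - t = m - sig * s" by (auto simp: h_def l_def m_def)
  have sp: "0 < 1 + s^2" by (simp add: add_pos_nonneg)
  have q0: "0 < q" and q1: "q < 1" using s sp by (auto simp: q_def field_simps)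
  have q2: "q \<le> s^2" using s sp unfolding q_def
    by (simp add: divide_le_eq mult_le_cancel_left1)
  have omq: "1 - q = 1 / (1 + s^2)" unfolding q_def using sp
    by (simp add: diff_divide_distrib[symmetric] divide_simps)
  define D where "D = distr (measure_pmf (bernoulli_pmf q)) borel (\<lambda>b. if b then h else l)"
  note tp = two_point[where h=h and l=l, OF q0 q1, folded D_def]
  have I: "(\<integral>x. f x \<partial>D) = f h * q + f l * (1 - q)" if "f \<in> borel_measurable borel" for f
    using tp(4)[OF that] .
  have mean: "h * q + l * (1 - q) = mu"
    unfolding h_def l_def omq unfolding q_def using alg1[OF s] .
  have sq: "h^2 * q + l^2 * (1 - q) = mu^2 + sig^2"
    unfolding h_def l_def omq unfolding q_def using alg2[OF s] .
  have nh: "neg_part (h - t) \<le> neg_part m"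
  proof -
    have "0 < sig / s" using sig s by simp
    then show ?thesis unfolding ht neg_part_def by (auto simp: max_def)
  qed
  have nl: "neg_part (l - t) \<le> neg_part m + sig * s"
    using sig s unfolding lt neg_part_def by (simp add: max_def)
  have nl0: "0 \<le> neg_part (l - t)" "0 \<le> neg_part (h - t)" by (simp_all add: pn_facts)
  have neg: "neg_part (h - t) * q + neg_part (l - t) * (1 - q) \<le> lam"
  proof -
    have "neg_part (h - t) * q + neg_part (l - t) * (1 - q)
        \<le> neg_part m * q + (neg_part m + sig * s) * (1 - q)"
      using nh nl q0 q1 by (intro add_mono mult_right_mono) auto
    also have "\<dots> \<le> neg_part m + sig * s" using q0 q1 sig s
      by (simp add: algebra_simps mult_nonneg_nonneg)
    finally show ?thesis using sl m_def by simp
  qed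
  have inD: "D \<in> Lclass lam mu sig t"
  proof -
    have e1: "(\<integral>x. x \<partial>D) = mu" using I[of "\<lambda>x. x"] mean by simp
    have e2: "(\<integral>x. x^2 \<partial>D) = mu^2 + sig^2" using I[of "\<lambda>x. x^2"] sq by simp
    have e3: "(\<integral>x. neg_part (x - t) \<partial>D) \<le> lam"
    proof -
      have "(\<integral>x. neg_part (x - t) \<partial>D) = neg_part (h - t) * q + neg_part (l - t) * (1 - q)" by (rule I) measurable
      then show ?thesis using neg by simp
    qed
    have "integrable D (\<lambda>x. x)" "integrable D (\<lambda>x. x^2)" by (rule tp(3), simp)+
    then show ?thesis unfolding Lclass_def mem_Collect_eq using tp(1,2) e1 e2 e3 by blast
  qed
  have "(\<integral>x. (pos_part (x - t))^2 \<partial>D) = (pos_part (h - t))^2 * q + (pos_part (l - t))^2 * (1 - q)"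
    by (rule I) measurable
  also have "\<dots> = ((h - t)^2 * q + (l - t)^2 * (1 - q))
        - ((neg_part (h - t))^2 * q + (neg_part (l - t))^2 * (1 - q))"
  proof -
    have a: "(pos_part (h - t))^2 = (h - t)^2 - (neg_part (h - t))^2"
      "(pos_part (l - t))^2 = (l - t)^2 - (neg_part (l - t))^2"
      using pn_facts(4)[of "h - t"] pn_facts(4)[of "l - t"] by linarith+
    show ?thesis unfolding a by (simp add: algebra_simps)
  qed
  also have "(h - t)^2 * q + (l - t)^2 * (1 - q) = m^2 + sig^2"
    unfolding ht lt omq unfolding q_def using alg2[OF s] .
  finally have val: "(\<integral>x. (pos_part (x - t))^2 \<partial>D) = m^2 + sig^2
        - ((neg_part (h - t))^2 * q + (neg_part (l - t))^2 * (1 - q))" .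
  have b1: "(neg_part (h - t))^2 * q \<le> (neg_part m)^2 * s^2"
    using nh nl0 q0 q2 by (intro mult_mono power_mono) (auto simp: pn_facts)
  have b2: "(neg_part (l - t))^2 * (1 - q) \<le> (neg_part m + sig * s)^2"
  proof -
    have "(neg_part (l - t))^2 * (1 - q) \<le> (neg_part (l - t))^2" using q0 
      by (simp add: mult_left_le)
    also have "\<dots> \<le> (neg_part m + sig * s)^2" using nl nl0 by (intro power_mono) auto
    finally show ?thesis .
  qed
  show ?thesis using inD val b1 b2 unfolding m_def by (intro bexI[of _ D]) auto
qed

lemma boundary:
  fixes mu t sig :: real
  assumes sig: "sig > 0" and m0: "mu - t < 0"
  shows "Lclass (neg_part (mu - t)) mu sig t \<noteq> {}"
proof -
  define m where "m = mu - t"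
  have m: "m < 0" using m0 m_def by simp
  define q where "q = sig^2 / (m^2 + sig^2)"
  define a where "a = (m^2 + sig^2) / m"
  have pos: "0 < m^2 + sig^2" using sig by (simp add: add_nonneg_pos)
  have q0: "0 < q" and q1: "q < 1" using sig m pos by (auto simp: q_def field_simps)
  have omq: "1 - q = m^2 / (m^2 + sig^2)" unfolding q_def using pos
    using sig by (simp add: diff_divide_distrib[symmetric] divide_simps)
  define D where "D = distr (measure_pmf (bernoulli_pmf q)) borel (\<lambda>b. if b then t else t + a)"
  note tp = two_point[where h=t and l="t + a", OF q0 q1, folded D_def]
  have I: "(\<integral>x. f x \<partial>D) = f t * q + f (t + a) * (1 - q)" if "f \<in> borel_measurable borel" for f
    using tp(4)[OF that] .
  have tm: "t + m = mu" using m_def by simp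
  have mean: "t * q + (t + a) * (1 - q) = mu"
    unfolding a_def omq tm[symmetric] unfolding q_def by (rule alg3(1)[OF m pos])
  have sq: "t^2 * q + (t + a)^2 * (1 - q) = mu^2 + sig^2"
    unfolding a_def omq tm[symmetric] unfolding q_def by (rule alg3(2)[OF m pos])
  have a0: "a < 0" unfolding a_def using m pos by (simp add: divide_pos_neg)
  have neg: "neg_part (t - t) * q + neg_part (t + a - t) * (1 - q) = neg_part (mu - t)"
    using a0 m alg3(3)[OF m pos] unfolding neg_part_def m_def[symmetric] omq
    by (simp add: a_def[symmetric])
  have "D \<in> Lclass (neg_part (mu - t)) mu sig t"
  proof -
    have e1: "(\<integral>x. x \<partial>D) = mu" using I[of "\<lambda>x. x"] mean by simp
    have e2: "(\<integral>x. x^2 \<partial>D) = mu^2 + sig^2" using I[of "\<lambda>x. x^2"] sq by simp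
    have e3: "(\<integral>x. neg_part (x - t) \<partial>D) \<le> neg_part (mu - t)"
    proof -
      have "(\<integral>x. neg_part (x - t) \<partial>D) = neg_part (t - t) * q + neg_part (t + a - t) * (1 - q)" by (rule I) measurable
      then show ?thesis using neg by simp
    qed
    have "integrable D (\<lambda>x. x)" "integrable D (\<lambda>x. x^2)" by (rule tp(3), simp)+
    then show ?thesis unfolding Lclass_def mem_Collect_eq using tp(1,2) e1 e2 e3 by blast
  qed
  then show ?thesis by blast
qed


theorem theorem2:
  fixes mu t sig lam :: real
  assumes "sig > 0" and "lam > 0" and "lam \<ge> neg_part (mu - t)"
  shows "(SUP F \<in> Lclass lam mu sig t. ereal (\<integral>x. (pos_part (x - t)) ^ 2 \<partial>F))
         = ereal (if lam > neg_part (mu - t) then sig ^ 2 + (pos_part (mu - t)) ^ 2 else 0)"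
proof (cases "lam > neg_part (mu - t)")
  case True
  define n where "n = neg_part (mu - t)"
  define V where "V = sig ^ 2 + (pos_part (mu - t)) ^ 2"
  define g where "g = (\<lambda>s::real. (mu - t)^2 + sig^2 - n^2 * s^2 - (n + sig * s)^2)"
  let ?S = "(SUP F \<in> Lclass lam mu sig t. ereal (\<integral>x. (pos_part (x - t)) ^ 2 \<partial>F))"
  have le: "?S \<le> ereal V"
    by (rule SUP_least) (use upper(3) in \<open>auto simp: V_def\<close>)
  have g0: "g 0 = V" unfolding g_def V_def n_def using pn_facts(4)[of "mu - t"] by simp
  have lim: "((\<lambda>s. ereal (g s)) \<longlongrightarrow> ereal (g 0)) (at_right 0)"
    unfolding g_def by (intro tendsto_intros tendsto_ident_at)
  have ev: "eventually (\<lambda>s. ereal (g s) \<le> ?S) (at_right 0)"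
    unfolding eventually_at_right_field
  proof (intro exI[of _ "(lam - n) / sig"] conjI allI impI)
    show "0 < (lam - n) / sig" using True assms(1) n_def by simp
    fix s :: real assume s0: "0 < s" and s1: "s < (lam - n) / sig"
    from s1 have "sig * s \<le> lam - neg_part (mu - t)" using assms(1) n_def
      by (simp add: pos_less_divide_eq mult.commute)
    from family[OF assms(1) s0 this] obtain F where
      F: "F \<in> Lclass lam mu sig t" "g s \<le> (\<integral>x. (pos_part (x - t))^2 \<partial>F)"
      unfolding g_def n_def by blast
    have "ereal (g s) \<le> ereal (\<integral>x. (pos_part (x - t))^2 \<partial>F)" using F(2) by simp
    also have "\<dots> \<le> ?S" by (rule SUP_upper) (fact F(1))
    finally show "ereal (g s) \<le> ?S" .
  qed
  have "ereal V \<le> ?S"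
    using tendsto_upperbound[OF lim ev trivial_limit_at_right_real] g0 by simp
  with le True show ?thesis by (simp add: V_def)
next
  case False
  let ?S = "(SUP F \<in> Lclass lam mu sig t. ereal (\<integral>x. (pos_part (x - t)) ^ 2 \<partial>F))"
  have eq: "lam = neg_part (mu - t)" using False assms(3) by simp
  have m0: "mu - t < 0" using eq assms(2) by (auto simp: neg_part_def max_def split: if_splits)
  have le: "?S \<le> ereal 0"
  proof (rule SUP_least)
    fix F assume F: "F \<in> Lclass lam mu sig t"
    have "(\<integral>x. (pos_part (x - t))^2 \<partial>F) = 0" using upper(4)[OF F] eq assms(2) by simp
    then show "ereal (\<integral>x. (pos_part (x - t))^2 \<partial>F) \<le> ereal 0" by simp
  qed
  obtain F where F: "F \<in> Lclass lam mu sig t" using boundary[OF assms(1) m0] eq by auto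
  have "ereal 0 \<le> ereal (\<integral>x. (pos_part (x - t))^2 \<partial>F)" using upper(2)[OF F] by simp
  also have "\<dots> \<le> ?S" by (rule SUP_upper) (fact F)
  finally show ?thesis using le False by simp
qed

end
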